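(* Let $n\ge 2$, $a,b\in\mathbb{Z}_n$, $Q=Q_{a,b}(\mathbb{Z}_n)$, and $x=(x_1,x_2,x_3)$, $y=(y_1,y_2,y_3)$, $z=(z_1,z_2,z_3)\in Q$. Then: (i) $x\backslash y=(y_1-x_1-(y_3-x_3)x_3y_2-a(x_2,y_2-x_2)_n-b(x_3,y_3-x_3)_n,\ y_2-x_2,\ y_3-x_3)$; (ii) $(xy)\backslash(x(yz))=(z_1+y_3(x_3z_2-x_2z_3),\ z_2,\ z_3)$; (iii) $Q$ is a nonassociative commutative A-loop of order $n^3$; (iv) $N_\lambda(Q)=Z(Q)=\mathbb{Z}_n\times 0\times 0$ and $N_\mu(Q)=\mathbb{Z}_n\times\mathbb{Z}_n\times 0$ as subsets of $Q$; (v) $Q/Z(Q)\cong\mathrm{Inn}(Q)\cong\mathbb{Z}_n\times\mathbb{Z}_n$, and $\mathrm{Inn}(Q)=\{L_{u,v}:u,v\in Q\}$; (vi) for every integer $m\ge0$, $x^m=\big(mx_1+2\binom{m+1}{3}x_2x_3^2+at_2+bt_3,\ mx_2,\ mx_3\big)$, where $t_i=\sum_{k=1}^{m-1}(x_i,kx_i)_n$ (the sum is empty and the binomial coefficient is $0$ when $m<2$).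
   Context: Identify $\mathbb{Z}_n$ with $\{0,1,\dots,n-1\}$; all coordinate arithmetic is in $\mathbb{Z}_n$. The overflow indicator is $(x,y)_n=1$ if $x+y\ge n$ as integers and $(x,y)_n=0$ otherwise. For $a,b\in\mathbb{Z}_n$, $Q_{a,b}(\mathbb{Z}_n)$ is the set $\mathbb{Z}_n^3$ with multiplication $(x_1,x_2,x_3)(y_1,y_2,y_3)=(x_1+y_1+(x_2+y_2)x_3y_3+a(x_2,y_2)_n+b(x_3,y_3)_n,\ x_2+y_2,\ x_3+y_3)$; it is a commutative loop with neutral element $(0,0,0)$. $u\backslash w$ denotes the unique $z$ with $uz=w$; $L_{u,v}=L_{vu}^{-1}L_vL_u$. $\mathrm{Inn}(Q)$ is the group generated by $L_{x,y}$, $R_{x,y}=R_{xy}^{-1}R_yR_x$, $T_x=L_x^{-1}R_x$; an A-loop is a loop whose inner mappings are automorphisms. Nuclei: $N_\lambda=\{x:(xy)z=x(yz)\ \forall y,z\}$, $N_\mu=\{y:(xy)z=x(yz)\ \forall x,z\}$; $Z(Q)$ is the center. Powers are well defined as the loop is power-associative. *)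

theory Defs
  imports "HOL-Algebra.Algebra"
begin

definition is_loop :: "'a set \<Rightarrow> ('a \<Rightarrow> 'a \<Rightarrow> 'a) \<Rightarrow> 'a \<Rightarrow> bool" where
  "is_loop S m e \<longleftrightarrow> e \<in> S \<and> (\<forall>x\<in>S. \<forall>y\<in>S. m x y \<in> S)
     \<and> (\<forall>x\<in>S. m e x = x \<and> m x e = x)
     \<and> (\<forall>u\<in>S. \<forall>w\<in>S. \<exists>!z. z \<in> S \<and> m u z = w)
     \<and> (\<forall>u\<in>S. \<forall>w\<in>S. \<exists>!z. z \<in> S \<and> m z u = w)"

definition is_commutative :: "'a set \<Rightarrow> ('a \<Rightarrow> 'a \<Rightarrow> 'a) \<Rightarrow> bool" where
  "is_commutative S m \<longleftrightarrow> (\<forall>x\<in>S. \<forall>y\<in>S. m x y = m y x)"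

definition is_associative :: "'a set \<Rightarrow> ('a \<Rightarrow> 'a \<Rightarrow> 'a) \<Rightarrow> bool" where
  "is_associative S m \<longleftrightarrow> (\<forall>x\<in>S. \<forall>y\<in>S. \<forall>z\<in>S. m (m x y) z = m x (m y z))"

definition ldiv :: "'a set \<Rightarrow> ('a \<Rightarrow> 'a \<Rightarrow> 'a) \<Rightarrow> 'a \<Rightarrow> 'a \<Rightarrow> 'a" where
  "ldiv S m u w = (THE z. z \<in> S \<and> m u z = w)"

definition rdiv :: "'a set \<Rightarrow> ('a \<Rightarrow> 'a \<Rightarrow> 'a) \<Rightarrow> 'a \<Rightarrow> 'a \<Rightarrow> 'a" where
  "rdiv S m w u = (THE z. z \<in> S \<and> m z u = w)"

text \<open>Permutations of S are represented as functions that are the identity outside S.\<close>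
definition on_carrier :: "'a set \<Rightarrow> ('a \<Rightarrow> 'a) \<Rightarrow> 'a \<Rightarrow> 'a" where
  "on_carrier S f = (\<lambda>w. if w \<in> S then f w else w)"

definition Lmap :: "'a set \<Rightarrow> ('a \<Rightarrow> 'a \<Rightarrow> 'a) \<Rightarrow> 'a \<Rightarrow> 'a \<Rightarrow> 'a \<Rightarrow> 'a" where
  "Lmap S m u v = on_carrier S (\<lambda>w. ldiv S m (m v u) (m v (m u w)))"

definition Rmap :: "'a set \<Rightarrow> ('a \<Rightarrow> 'a \<Rightarrow> 'a) \<Rightarrow> 'a \<Rightarrow> 'a \<Rightarrow> 'a \<Rightarrow> 'a" where
  "Rmap S m u v = on_carrier S (\<lambda>w. rdiv S m (m (m w u) v) (m u v))"

definition Tmap :: "'a set \<Rightarrow> ('a \<Rightarrow> 'a \<Rightarrow> 'a) \<Rightarrow> 'a \<Rightarrow> 'a \<Rightarrow> 'a" where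
  "Tmap S m u = on_carrier S (\<lambda>w. ldiv S m u (m w u))"

inductive_set Inn :: "'a set \<Rightarrow> ('a \<Rightarrow> 'a \<Rightarrow> 'a) \<Rightarrow> ('a \<Rightarrow> 'a) set"
  for S m where
  Inn_id: "id \<in> Inn S m"
| Inn_L: "u \<in> S \<Longrightarrow> v \<in> S \<Longrightarrow> Lmap S m u v \<in> Inn S m"
| Inn_R: "u \<in> S \<Longrightarrow> v \<in> S \<Longrightarrow> Rmap S m u v \<in> Inn S m"
| Inn_T: "u \<in> S \<Longrightarrow> Tmap S m u \<in> Inn S m"
| Inn_comp: "f \<in> Inn S m \<Longrightarrow> g \<in> Inn S m \<Longrightarrow> f \<circ> g \<in> Inn S m"
| Inn_inv: "f \<in> Inn S m \<Longrightarrow> on_carrier S (inv_into S f) \<in> Inn S m"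

definition Inn_group :: "'a set \<Rightarrow> ('a \<Rightarrow> 'a \<Rightarrow> 'a) \<Rightarrow> ('a \<Rightarrow> 'a) monoid" where
  "Inn_group S m = \<lparr>carrier = Inn S m, monoid.mult = (\<circ>), one = id\<rparr>"

definition is_automorphism :: "'a set \<Rightarrow> ('a \<Rightarrow> 'a \<Rightarrow> 'a) \<Rightarrow> ('a \<Rightarrow> 'a) \<Rightarrow> bool" where
  "is_automorphism S m f \<longleftrightarrow> bij_betw f S S \<and> (\<forall>x\<in>S. \<forall>y\<in>S. f (m x y) = m (f x) (f y))"

definition is_A_loop :: "'a set \<Rightarrow> ('a \<Rightarrow> 'a \<Rightarrow> 'a) \<Rightarrow> 'a \<Rightarrow> bool" where
  "is_A_loop S m e \<longleftrightarrow> is_loop S m e \<and> (\<forall>f\<in>Inn S m. is_automorphism S m f)"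

definition left_nucleus :: "'a set \<Rightarrow> ('a \<Rightarrow> 'a \<Rightarrow> 'a) \<Rightarrow> 'a set" where
  "left_nucleus S m = {x \<in> S. \<forall>y\<in>S. \<forall>z\<in>S. m (m x y) z = m x (m y z)}"

definition middle_nucleus :: "'a set \<Rightarrow> ('a \<Rightarrow> 'a \<Rightarrow> 'a) \<Rightarrow> 'a set" where
  "middle_nucleus S m = {y \<in> S. \<forall>x\<in>S. \<forall>z\<in>S. m (m x y) z = m x (m y z)}"

definition right_nucleus :: "'a set \<Rightarrow> ('a \<Rightarrow> 'a \<Rightarrow> 'a) \<Rightarrow> 'a set" where
  "right_nucleus S m = {z \<in> S. \<forall>x\<in>S. \<forall>y\<in>S. m (m x y) z = m x (m y z)}"

definition loop_center :: "'a set \<Rightarrow> ('a \<Rightarrow> 'a \<Rightarrow> 'a) \<Rightarrow> 'a set" where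
  "loop_center S m = {x \<in> left_nucleus S m \<inter> middle_nucleus S m \<inter> right_nucleus S m.
                        \<forall>y\<in>S. m x y = m y x}"

definition lcoset :: "('a \<Rightarrow> 'a \<Rightarrow> 'a) \<Rightarrow> 'a \<Rightarrow> 'a set \<Rightarrow> 'a set" where
  "lcoset m x N = (\<lambda>z. m x z) ` N"

definition quotient_loop :: "'a set \<Rightarrow> ('a \<Rightarrow> 'a \<Rightarrow> 'a) \<Rightarrow> 'a \<Rightarrow> 'a set \<Rightarrow> 'a set monoid" where
  "quotient_loop S m e N =
     \<lparr>carrier = (\<lambda>x. lcoset m x N) ` S,
      monoid.mult = (\<lambda>A B. lcoset m (m (SOME x. x \<in> A) (SOME y. y \<in> B)) N),
      one = lcoset m e N\<rparr>"

primrec loop_pow :: "('a \<Rightarrow> 'a \<Rightarrow> 'a) \<Rightarrow> 'a \<Rightarrow> 'a \<Rightarrow> nat \<Rightarrow> 'a" where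
  "loop_pow m e x 0 = e"
| "loop_pow m e x (Suc k) = m x (loop_pow m e x k)"

text \<open>Z_n is identified with {0..<n} (as integers); arithmetic is taken mod n.\<close>
definition Zn :: "nat \<Rightarrow> int set" where
  "Zn n = {0..<int n}"

definition Qcar :: "nat \<Rightarrow> (int \<times> int \<times> int) set" where
  "Qcar n = Zn n \<times> Zn n \<times> Zn n"

definition ovf :: "nat \<Rightarrow> int \<Rightarrow> int \<Rightarrow> int" where
  "ovf n x y = (if x + y \<ge> int n then 1 else 0)"

definition Qmul :: "nat \<Rightarrow> int \<Rightarrow> int \<Rightarrow> int \<times> int \<times> int \<Rightarrow> int \<times> int \<times> int \<Rightarrow> int \<times> int \<times> int" where
  "Qmul n a b x y = (case x of (x1, x2, x3) \<Rightarrow> case y of (y1, y2, y3) \<Rightarrow>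
     ((x1 + y1 + ((x2 + y2) mod int n) * x3 * y3 + a * ovf n x2 y2 + b * ovf n x3 y3) mod int n,
      (x2 + y2) mod int n, (x3 + y3) mod int n))"

definition Qone :: "int \<times> int \<times> int" where
  "Qone = (0, 0, 0)"

end

theory Submission
  imports Defs
begin

lemma mm_add: "(a::int) mod n = a' mod n \<Longrightarrow> b mod n = b' mod n \<Longrightarrow> (a+b) mod n = (a'+b') mod n"
  by (metis mod_add_cong)
lemma mm_diff: "(a::int) mod n = a' mod n \<Longrightarrow> b mod n = b' mod n \<Longrightarrow> (a-b) mod n = (a'-b') mod n"
  by (metis mod_diff_cong)
lemma mm_mult: "(a::int) mod n = a' mod n \<Longrightarrow> b mod n = b' mod n \<Longrightarrow> (a*b) mod n = (a'*b') mod n"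
  by (metis mod_mult_cong)
lemma mm_mod: "(a::int) mod n = a' mod n \<Longrightarrow> (a mod n) mod n = a' mod n"
  by simp
lemma strip_eq: "(p::int) mod n = e mod n \<Longrightarrow> q mod n = f mod n \<Longrightarrow> e = f \<Longrightarrow> p mod n = q mod n"
  by simp

definition ldc :: "nat \<Rightarrow> int \<Rightarrow> int \<Rightarrow> int\<times>int\<times>int \<Rightarrow> int\<times>int\<times>int \<Rightarrow> int\<times>int\<times>int" where
 "ldc n a b x y = (case x of (x1,x2,x3) \<Rightarrow> case y of (y1,y2,y3) \<Rightarrow>
          ((y1 - x1 - ((y3 - x3) mod int n) * x3 * y2 - a * ovf n x2 ((y2 - x2) mod int n)
               - b * ovf n x3 ((y3 - x3) mod int n)) mod int n,
           (y2 - x2) mod int n, (y3 - x3) mod int n))"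

lemma poly_assoc: "(o1::int) + o2 = o3 + o4 \<Longrightarrow> p1 + p2 = p3 + p4 \<Longrightarrow> x1 +
    (y1 + z1 + (y2 + z2) * y3 * z3 + a * o3 + b * p3) +
    (x2 + (y2 + z2)) * x3 * (y3 + z3) +
    a * o4 + b * p4 = (x1 + y1 + (x2 + y2) * x3 * y3 + a * o1 + b * p1) + (z1 + y3 * (x3 * z2 - x2 * z3)) + ((x2+y2)+z2)*(x3+y3)*z3 + a*o2 + b*p2"
proof -
  assume h1: "o1 + o2 = o3 + o4" and h2: "p1 + p2 = p3 + p4"
  have "a*o1 + a*o2 = a*o3 + a*o4" by (metis h1 distrib_left)
  moreover have "b*p1 + b*p2 = b*p3 + b*p4" by (metis h2 distrib_left)
  ultimately show ?thesis by (simp add: algebra_simps; linarith)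
qed

definition shear :: "nat \<Rightarrow> int \<Rightarrow> int \<Rightarrow> int\<times>int\<times>int \<Rightarrow> int\<times>int\<times>int" where
  "shear n al be = on_carrier (Qcar n) (\<lambda>w. case w of (w1,w2,w3) \<Rightarrow> ((w1 + al*w2 + be*w3) mod int n, w2, w3))"

locale QL =
  fixes n :: nat and a b :: int
  assumes n2: "n \<ge> 2"
begin

abbreviation "S \<equiv> Qcar n"
abbreviation "M \<equiv> Qmul n a b"
abbreviation "sh \<equiv> shear n"

lemma npos: "(0::int) < int n" using n2 by simp

lemma memS: "(x1,x2,x3) \<in> S \<longleftrightarrow> 0 \<le> x1 \<and> x1 < int n \<and> 0 \<le> x2 \<and> x2 < int n \<and> 0 \<le> x3 \<and> x3 < int n"
  by (auto simp: Qcar_def Zn_def)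

lemma Mdef: "M (x1,x2,x3) (y1,y2,y3) =
     ((x1 + y1 + ((x2 + y2) mod int n) * x3 * y3 + a * ovf n x2 y2 + b * ovf n x3 y3) mod int n,
      (x2 + y2) mod int n, (x3 + y3) mod int n)"
  by (simp add: Qmul_def)

lemma modr: "0 \<le> x \<Longrightarrow> x < int n \<Longrightarrow> x mod int n = x" by simp

lemma M_closed: "x \<in> S \<Longrightarrow> y \<in> S \<Longrightarrow> M x y \<in> S"
  using npos by (cases x; cases y) (simp add: Mdef memS)

lemma ovf_div: "0 \<le> x \<Longrightarrow> x < int n \<Longrightarrow> 0 \<le> y \<Longrightarrow> y < int n \<Longrightarrow> ovf n x y = (x+y) div int n"
proof -
  assume h: "0 \<le> x" "x < int n" "0 \<le> y" "y < int n"
  show ?thesis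
  proof (cases "x + y \<ge> int n")
    case True
    have "(x+y) div int n = ((x+y-int n) + 1 * int n) div int n" by simp
    also have "\<dots> = (x+y-int n) div int n + 1" using npos by (simp only: div_mult_self1)
    also have "(x+y-int n) div int n = 0" using h True by (intro div_pos_pos_trivial) auto
    finally show ?thesis using True by (simp add: ovf_def)
  next
    case False then show ?thesis using h by (simp add: ovf_def div_pos_pos_trivial)
  qed
qed

lemma ovf0: "0 \<le> x \<Longrightarrow> x < int n \<Longrightarrow> ovf n x 0 = 0" "0 \<le> x \<Longrightarrow> x < int n \<Longrightarrow> ovf n 0 x = 0"
  by (auto simp: ovf_def)

lemma ovf_comm: "ovf n x y = ovf n y x" by (simp add: ovf_def add.commute)

lemma carry: "0 \<le> x \<Longrightarrow> x < int n \<Longrightarrow> 0 \<le> y \<Longrightarrow> y < int n \<Longrightarrow> 0 \<le> z \<Longrightarrow> z < int n \<Longrightarrow>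
   ovf n x y + ovf n ((x+y) mod int n) z = (x+y+z) div int n"
proof -
  assume h: "0 \<le> x" "x < int n" "0 \<le> y" "y < int n" "0 \<le> z" "z < int n"
  have m: "0 \<le> (x+y) mod int n" "(x+y) mod int n < int n" using npos by auto
  have "x + y + z = ((x+y) mod int n + z) + ((x+y) div int n) * int n"
    by (metis add.commute add.left_commute mod_div_mult_eq)
  then have "(x+y+z) div int n = ((x+y) mod int n + z) div int n + (x+y) div int n"
    using npos by (simp only: div_mult_self1)
  then show ?thesis using ovf_div[OF h(1-4)] ovf_div[OF m h(5,6)] by simp
qed

lemma ldc_in: "x \<in> S \<Longrightarrow> y \<in> S \<Longrightarrow> ldc n a b x y \<in> S"
  using npos by (cases x; cases y) (simp add: ldc_def memS)

lemma M_ldc: "x \<in> S \<Longrightarrow> y \<in> S \<Longrightarrow> M x (ldc n a b x y) = y"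
proof -
  assume "x \<in> S" "y \<in> S"
  obtain x1 x2 x3 where x: "x = (x1,x2,x3)" by (cases x) auto
  obtain y1 y2 y3 where y: "y = (y1,y2,y3)" by (cases y) auto
  have b: "0 \<le> x1" "x1 < int n" "0 \<le> x2" "x2 < int n" "0 \<le> x3" "x3 < int n"
     "0 \<le> y1" "y1 < int n" "0 \<le> y2" "y2 < int n" "0 \<le> y3" "y3 < int n"
    using \<open>x \<in> S\<close> \<open>y \<in> S\<close> by (auto simp: x y memS)
  have e2: "(x2 + (y2 - x2) mod int n) mod int n = y2" using b by (simp add: mod_simps)
  have e3: "(x3 + (y3 - x3) mod int n) mod int n = y3" using b by (simp add: mod_simps)
  have e1: "(x1 + (y1 - x1 - ((y3 - x3) mod int n) * x3 * y2 - a * ovf n x2 ((y2 - x2) mod int n)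
               - b * ovf n x3 ((y3 - x3) mod int n)) mod int n + y2 * x3 * ((y3 - x3) mod int n)
             + a * ovf n x2 ((y2 - x2) mod int n) + b * ovf n x3 ((y3 - x3) mod int n)) mod int n = y1"
  proof -
    have "(x1 + (y1 - x1 - ((y3 - x3) mod int n) * x3 * y2 - a * ovf n x2 ((y2 - x2) mod int n)
               - b * ovf n x3 ((y3 - x3) mod int n)) mod int n + y2 * x3 * ((y3 - x3) mod int n)
             + a * ovf n x2 ((y2 - x2) mod int n) + b * ovf n x3 ((y3 - x3) mod int n)) mod int n
       = (x1 + (y1 - x1 - ((y3 - x3) mod int n) * x3 * y2 - a * ovf n x2 ((y2 - x2) mod int n)
               - b * ovf n x3 ((y3 - x3) mod int n)) + y2 * x3 * ((y3 - x3) mod int n)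
             + a * ovf n x2 ((y2 - x2) mod int n) + b * ovf n x3 ((y3 - x3) mod int n)) mod int n"
      by (rule strip_eq, (rule mm_mod mm_add mm_diff mm_mult refl)+)
    also have "\<dots> = y1 mod int n" by (rule strip_eq, (rule mm_mod mm_add mm_diff mm_mult refl)+) (simp add: algebra_simps)
    finally show ?thesis using b by simp
  qed
  show ?thesis using e1 e2 e3 by (simp add: x y ldc_def Mdef)
qed

lemma ldc_M: "x \<in> S \<Longrightarrow> z \<in> S \<Longrightarrow> ldc n a b x (M x z) = z"
proof -
  assume "x \<in> S" "z \<in> S"
  obtain x1 x2 x3 where x: "x = (x1,x2,x3)" by (cases x) auto
  obtain z1 z2 z3 where z: "z = (z1,z2,z3)" by (cases z) auto
  have b: "0 \<le> x1" "x1 < int n" "0 \<le> x2" "x2 < int n" "0 \<le> x3" "x3 < int n"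
     "0 \<le> z1" "z1 < int n" "0 \<le> z2" "z2 < int n" "0 \<le> z3" "z3 < int n"
    using \<open>x \<in> S\<close> \<open>z \<in> S\<close> by (auto simp: x z memS)
  have e2: "((x2 + z2) mod int n - x2) mod int n = z2" using b by (simp add: mod_simps)
  have e3: "((x3 + z3) mod int n - x3) mod int n = z3" using b by (simp add: mod_simps)
  have e1: "((x1 + z1 + ((x2 + z2) mod int n) * x3 * z3 + a * ovf n x2 z2 + b * ovf n x3 z3) mod int n
        - x1 - z3 * x3 * ((x2 + z2) mod int n) - a * ovf n x2 z2 - b * ovf n x3 z3) mod int n = z1"
  proof -
    have "((x1 + z1 + ((x2 + z2) mod int n) * x3 * z3 + a * ovf n x2 z2 + b * ovf n x3 z3) mod int n
        - x1 - z3 * x3 * ((x2 + z2) mod int n) - a * ovf n x2 z2 - b * ovf n x3 z3) mod int n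
      = ((x1 + z1 + ((x2 + z2) mod int n) * x3 * z3 + a * ovf n x2 z2 + b * ovf n x3 z3)
        - x1 - z3 * x3 * ((x2 + z2) mod int n) - a * ovf n x2 z2 - b * ovf n x3 z3) mod int n"
      by (rule strip_eq, (rule mm_mod mm_add mm_diff mm_mult refl)+)
    also have "\<dots> = z1 mod int n" by (rule strip_eq, (rule mm_mod mm_add mm_diff mm_mult refl)+) (simp add: algebra_simps)
    finally show ?thesis using b by simp
  qed
  show ?thesis using e1 e2 e3 by (simp add: x z ldc_def Mdef)
qed

lemma cancel: "x \<in> S \<Longrightarrow> z \<in> S \<Longrightarrow> z' \<in> S \<Longrightarrow> M x z = M x z' \<Longrightarrow> z = z'"
  by (metis ldc_M)

lemma ldiv_eq: "u \<in> S \<Longrightarrow> z \<in> S \<Longrightarrow> M u z = w \<Longrightarrow> ldiv S M u w = z"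
  unfolding ldiv_def by (rule the_equality) (auto dest: cancel)

lemma ldiv_formula: "x \<in> S \<Longrightarrow> y \<in> S \<Longrightarrow> ldiv S M x y = ldc n a b x y"
  by (rule ldiv_eq) (auto simp: ldc_in M_ldc)


lemma M_comm: "M x y = M y x"
  by (cases x; cases y) (simp add: Mdef ovf_comm add.commute mult.commute add.left_commute mult.left_commute)

lemma M_one: "x \<in> S \<Longrightarrow> M Qone x = x"
  by (cases x) (simp add: Qone_def Mdef memS ovf0)

definition cc :: "int\<times>int\<times>int \<Rightarrow> int\<times>int\<times>int \<Rightarrow> int\<times>int\<times>int \<Rightarrow> int\<times>int\<times>int" where
  "cc x y z = (case x of (x1,x2,x3) \<Rightarrow> case y of (y1,y2,y3) \<Rightarrow> case z of (z1,z2,z3) \<Rightarrow>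
      ((z1 + y3 * (x3 * z2 - x2 * z3)) mod int n, z2, z3))"

lemma cc_in: "z \<in> S \<Longrightarrow> cc x y z \<in> S"
  using npos by (cases x; cases y; cases z) (simp add: cc_def memS)

lemma assoc_cc: "x \<in> S \<Longrightarrow> y \<in> S \<Longrightarrow> z \<in> S \<Longrightarrow> M x (M y z) = M (M x y) (cc x y z)"
proof -
  assume "x \<in> S" "y \<in> S" "z \<in> S"
  obtain x1 x2 x3 where x: "x = (x1,x2,x3)" by (cases x) auto
  obtain y1 y2 y3 where y: "y = (y1,y2,y3)" by (cases y) auto
  obtain z1 z2 z3 where z: "z = (z1,z2,z3)" by (cases z) auto
  have b: "0 \<le> x1" "x1 < int n" "0 \<le> x2" "x2 < int n" "0 \<le> x3" "x3 < int n"
     "0 \<le> y1" "y1 < int n" "0 \<le> y2" "y2 < int n" "0 \<le> y3" "y3 < int n"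
     "0 \<le> z1" "z1 < int n" "0 \<le> z2" "z2 < int n" "0 \<le> z3" "z3 < int n"
    using \<open>x \<in> S\<close> \<open>y \<in> S\<close> \<open>z \<in> S\<close> by (auto simp: x y z memS)
  have c1: "ovf n x2 y2 + ovf n ((x2+y2) mod int n) z2 = ovf n y2 z2 + ovf n x2 ((y2+z2) mod int n)"
    using carry[of x2 y2 z2] carry[of y2 z2 x2] b by (simp add: ovf_comm add_ac)
  have c2: "ovf n x3 y3 + ovf n ((x3+y3) mod int n) z3 = ovf n y3 z3 + ovf n x3 ((y3+z3) mod int n)"
    using carry[of x3 y3 z3] carry[of y3 z3 x3] b by (simp add: ovf_comm add_ac)
  have e2: "(x2 + (y2 + z2) mod int n) mod int n = ((x2 + y2) mod int n + z2) mod int n"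
    by (rule strip_eq, (rule mm_mod mm_add mm_diff mm_mult refl)+) (simp add: algebra_simps)
  have e3: "(x3 + (y3 + z3) mod int n) mod int n = ((x3 + y3) mod int n + z3) mod int n"
    by (rule strip_eq, (rule mm_mod mm_add mm_diff mm_mult refl)+) (simp add: algebra_simps)
  have e1: "(x1 + (y1 + z1 + ((y2 + z2) mod int n) * y3 * z3 + a * ovf n y2 z2 + b * ovf n y3 z3) mod int n
       + ((x2 + (y2 + z2) mod int n) mod int n) * x3 * ((y3 + z3) mod int n)
       + a * ovf n x2 ((y2 + z2) mod int n) + b * ovf n x3 ((y3 + z3) mod int n)) mod int n
     = ((x1 + y1 + ((x2 + y2) mod int n) * x3 * y3 + a * ovf n x2 y2 + b * ovf n x3 y3) mod int n
       + (z1 + y3 * (x3 * z2 - x2 * z3)) mod int n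
       + (((x2 + y2) mod int n + z2) mod int n) * ((x3 + y3) mod int n) * z3
       + a * ovf n ((x2 + y2) mod int n) z2 + b * ovf n ((x3 + y3) mod int n) z3) mod int n"
    by (rule strip_eq, (rule mm_mod mm_add mm_diff mm_mult refl)+) (rule poly_assoc[OF c1 c2])
  show ?thesis unfolding x y z cc_def Mdef prod.case by (intro arg_cong2[where f=Pair] e1 e2 e3)
qed


lemma ldiv_assoc: "x \<in> S \<Longrightarrow> y \<in> S \<Longrightarrow> z \<in> S \<Longrightarrow> ldiv S M (M x y) (M x (M y z)) = cc x y z"
  by (rule ldiv_eq) (auto simp: M_closed cc_in assoc_cc)

lemma assoc_iff: "x \<in> S \<Longrightarrow> y \<in> S \<Longrightarrow> z \<in> S \<Longrightarrow>
   M (M x y) z = M x (M y z) \<longleftrightarrow> int n dvd snd (snd y) * (snd (snd x) * fst (snd z) - fst (snd x) * snd (snd z))"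
proof -
  assume h: "x \<in> S" "y \<in> S" "z \<in> S"
  obtain x1 x2 x3 where x: "x = (x1,x2,x3)" by (cases x) auto
  obtain y1 y2 y3 where y: "y = (y1,y2,y3)" by (cases y) auto
  obtain z1 z2 z3 where z: "z = (z1,z2,z3)" by (cases z) auto
  have z1: "z1 mod int n = z1" using h by (simp add: z memS)
  have cs: "cc x y z \<in> S" by (rule cc_in[OF h(3)])
  have "M (M x y) z = M x (M y z) \<longleftrightarrow> z = cc x y z"
    using assoc_cc[OF h] cancel[OF M_closed[OF h(1,2)] h(3) cs] by auto
  also have "\<dots> \<longleftrightarrow> z1 mod int n = (z1 + y3 * (x3 * z2 - x2 * z3)) mod int n"
    using z1 by (auto simp: x y z cc_def)
  also have "\<dots> \<longleftrightarrow> int n dvd y3 * (x3 * z2 - x2 * z3)"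
    by (simp add: mod_eq_dvd_iff)
  finally show ?thesis by (simp add: x y z)
qed

lemma shear_app: "sh al be (w::int\<times>int\<times>int) = (if w \<in> S then ((fst w + al * fst (snd w) + be * snd (snd w)) mod int n, snd w) else w)"
  by (cases w) (simp add: shear_def on_carrier_def)

lemma shear_in: "w \<in> S \<Longrightarrow> sh al be w \<in> S"
  using npos by (cases w) (simp add: shear_app memS)

lemma shear_comp: "sh al be \<circ> sh ga de = sh (al+ga) (be+de)"
proof
  fix w
  show "(sh al be \<circ> sh ga de) w = sh (al + ga) (be + de) w"
  proof (cases "w \<in> S")
    case True
    obtain w1 w2 w3 where w: "w = (w1,w2,w3)" by (cases w) auto
    have "((w1 + ga * w2 + de * w3) mod int n + al * w2 + be * w3) mod int n = (w1 + (al + ga) * w2 + (be + de) * w3) mod int n"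
      by (rule strip_eq, (rule mm_mod mm_add mm_diff mm_mult refl)+) (simp add: algebra_simps)
    then show ?thesis using True shear_in[OF True, of ga de] by (simp add: shear_app w)
  next
    case False then show ?thesis by (simp add: shear_app)
  qed
qed

lemma shear_00: "sh 0 0 = id"
proof
  fix w show "sh 0 0 w = id w" by (cases w) (auto simp: shear_app memS)
qed

lemma shear_cong: assumes h: "al mod int n = ga mod int n" "be mod int n = de mod int n"
  shows "sh al be = sh ga de"
proof
  fix w :: "int\<times>int\<times>int"
  obtain w1 w2 w3 where w: "w = (w1,w2,w3)" by (cases w) auto
  have "(w1 + al * w2 + be * w3) mod int n = (w1 + ga * w2 + de * w3) mod int n"
    using h by (intro mm_add mm_mult refl) auto
  then show "sh al be w = sh ga de w" by (simp add: shear_app w)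
qed

lemma shear_inj: "inj_on (sh al be) S"
proof (rule inj_on_inverseI)
  fix w assume "w \<in> S"
  have "sh (-al) (-be) (sh al be w) = (sh (-al) (-be) \<circ> sh al be) w" by simp
  also have "\<dots> = w" by (simp add: shear_comp shear_00)
  finally show "sh (-al) (-be) (sh al be w) = w" .
qed

lemma shear_bij: "bij_betw (sh al be) S S"
proof -
  have "sh al be ` S = S"
  proof
    show "sh al be ` S \<subseteq> S" using shear_in by auto
    show "S \<subseteq> sh al be ` S"
    proof
      fix w assume "w \<in> S"
      have "w = (sh al be \<circ> sh (-al) (-be)) w" by (simp add: shear_comp shear_00)
      then show "w \<in> sh al be ` S" using shear_in[OF \<open>w \<in> S\<close>] by auto
    qed
  qed
  then show ?thesis using shear_inj by (simp add: bij_betw_def)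
qed

lemma shear_inv: "on_carrier S (inv_into S (sh al be)) = sh (-al) (-be)"
proof
  fix w
  show "on_carrier S (inv_into S (sh al be)) w = sh (- al) (- be) w"
  proof (cases "w \<in> S")
    case True
    have "sh al be (sh (-al) (-be) w) = w"
      using fun_cong[OF shear_comp[of al be "-al" "-be"], of w] by (simp add: shear_00)
    then have "inv_into S (sh al be) w = sh (-al) (-be) w"
      using shear_inj shear_in[OF True] by (metis inv_into_f_f)
    then show ?thesis using True by (simp add: on_carrier_def)
  next
    case False then show ?thesis by (simp add: on_carrier_def shear_app)
  qed
qed

lemma shear_hom: "x \<in> S \<Longrightarrow> y \<in> S \<Longrightarrow> sh al be (M x y) = M (sh al be x) (sh al be y)"
proof -
  assume h: "x \<in> S" "y \<in> S"
  obtain x1 x2 x3 where x: "x = (x1,x2,x3)" by (cases x) auto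
  obtain y1 y2 y3 where y: "y = (y1,y2,y3)" by (cases y) auto
  have e: "((x1 + y1 + ((x2 + y2) mod int n) * x3 * y3 + a * ovf n x2 y2 + b * ovf n x3 y3) mod int n
       + al * ((x2 + y2) mod int n) + be * ((x3 + y3) mod int n)) mod int n =
     ((x1 + al * x2 + be * x3) mod int n + (y1 + al * y2 + be * y3) mod int n
       + ((x2 + y2) mod int n) * x3 * y3 + a * ovf n x2 y2 + b * ovf n x3 y3) mod int n"
    by (rule strip_eq, (rule mm_mod mm_add mm_diff mm_mult refl)+) (simp add: algebra_simps)
  have "M x y \<in> S" using M_closed[OF h] .
  then show ?thesis using h e by (simp add: x y shear_app Mdef)
qed

lemma shear_aut: "is_automorphism S M (sh al be)"
  unfolding is_automorphism_def using shear_bij shear_hom by blast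


end

context QL begin
lemma Lmap_shear: "u \<in> S \<Longrightarrow> v \<in> S \<Longrightarrow>
  Lmap S M u v = sh (snd (snd u) * snd (snd v)) (- (snd (snd u) * fst (snd v)))"
proof
  fix w :: "int\<times>int\<times>int"
  assume h: "u \<in> S" "v \<in> S"
  show "Lmap S M u v w = sh (snd (snd u) * snd (snd v)) (- (snd (snd u) * fst (snd v))) w"
  proof (cases "w \<in> S")
    case True
    obtain u1 u2 u3 where u: "u = (u1,u2,u3)" by (cases u) auto
    obtain v1 v2 v3 where v: "v = (v1,v2,v3)" by (cases v) auto
    obtain w1 w2 w3 where w: "w = (w1,w2,w3)" by (cases w) auto
    have "Lmap S M u v w = cc v u w" using ldiv_assoc[OF h(2,1) True] True by (simp add: Lmap_def on_carrier_def)
    also have "\<dots> = ((w1 + u3 * (v3 * w2 - v2 * w3)) mod int n, w2, w3)" by (simp add: cc_def u v w)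
    also have "w1 + u3 * (v3 * w2 - v2 * w3) = w1 + u3 * v3 * w2 + - (u3 * v2) * w3" by (simp add: algebra_simps)
    finally show ?thesis using True by (simp add: shear_app u v w)
  next
    case False then show ?thesis by (simp add: Lmap_def on_carrier_def shear_app)
  qed
qed

lemma rdiv_ldiv: "rdiv S M w u = ldiv S M u w"
  unfolding rdiv_def ldiv_def by (metis M_comm)

lemma Rmap_Lmap: "Rmap S M u v = Lmap S M u v"
proof -
  have "\<And>w. M (M w u) v = M v (M u w)" by (simp add: M_comm)
  then show ?thesis unfolding Rmap_def Lmap_def rdiv_ldiv by (metis M_comm)
qed

lemma Tmap_id: "u \<in> S \<Longrightarrow> Tmap S M u = id"
proof
  fix w assume h: "u \<in> S"
  show "Tmap S M u w = id w"
  proof (cases "w \<in> S")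
    case True
    have "ldiv S M u (M w u) = w" by (rule ldiv_eq[OF h True]) (simp add: M_comm)
    then show ?thesis using True by (simp add: Tmap_def on_carrier_def)
  qed (simp add: Tmap_def on_carrier_def)
qed

lemma Inn_shear: "f \<in> Inn S M \<Longrightarrow> \<exists>al be. f = sh al be"
proof (induction rule: Inn.induct)
  case Inn_id then show ?case using shear_00 by metis
next
  case (Inn_L u v) then show ?case using Lmap_shear by metis
next
  case (Inn_R u v) then show ?case using Lmap_shear Rmap_Lmap by metis
next
  case (Inn_T u) then show ?case using Tmap_id shear_00 by metis
next
  case (Inn_comp f g) then show ?case using shear_comp by metis
next
  case (Inn_inv f) then show ?case using shear_inv by metis
qed

lemma shear_Lmap: "\<exists>u v. u \<in> S \<and> v \<in> S \<and> sh al be = Lmap S M u v"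
proof (intro exI conjI)
  let ?u = "(0::int, 0::int, 1::int)" and ?v = "(0::int, (- be) mod int n, al mod int n)"
  show "?u \<in> S" "?v \<in> S" using npos n2 by (auto simp: memS)
  have "Lmap S M ?u ?v = sh (al mod int n) (- ((- be) mod int n))"
    using Lmap_shear[OF \<open>?u \<in> S\<close> \<open>?v \<in> S\<close>] by simp
  also have "\<dots> = sh al be"
    by (rule shear_cong) (simp_all add: mod_simps)
  finally show "sh al be = Lmap S M ?u ?v" by simp
qed

lemma shear_Inn: "sh al be \<in> Inn S M"
proof -
  obtain u v where "u \<in> S" "v \<in> S" "sh al be = Lmap S M u v" using shear_Lmap by blast
  then show ?thesis by (simp add: Inn.Inn_L)
qed

lemma Inn_eq: "Inn S M = {Lmap S M u v | u v. u \<in> S \<and> v \<in> S}"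
proof
  show "Inn S M \<subseteq> {Lmap S M u v | u v. u \<in> S \<and> v \<in> S}"
  proof
    fix f assume "f \<in> Inn S M"
    then obtain al be where f: "f = sh al be" using Inn_shear by blast
    obtain u v where "u \<in> S" "v \<in> S" "sh al be = Lmap S M u v" using shear_Lmap by blast
    then have "f = Lmap S M u v \<and> u \<in> S \<and> v \<in> S" using f by simp
    then show "f \<in> {Lmap S M u v | u v. u \<in> S \<and> v \<in> S}"
      by (intro CollectI exI[where x=u] exI[where x=v])
  qed
  show "{Lmap S M u v | u v. u \<in> S \<and> v \<in> S} \<subseteq> Inn S M"
    by (auto intro: Inn.Inn_L)
qed

lemma Qone_in: "Qone \<in> S" using npos by (simp add: Qone_def memS)

lemma is_loop: "is_loop S M Qone"
proof -
  have ex: "\<exists>!z. z \<in> S \<and> M u z = w" if "u \<in> S" "w \<in> S" for u w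
    using that ldc_in M_ldc cancel by metis
  have ex2: "\<exists>!z. z \<in> S \<and> M z u = w" if "u \<in> S" "w \<in> S" for u w
  proof -
    have "\<And>z. M z u = M u z" by (rule M_comm)
    then show ?thesis using ex[OF that] by presburger
  qed
  show ?thesis unfolding is_loop_def
  proof (intro conjI ballI)
    show "Qone \<in> S" by (rule Qone_in)
  next
    fix x y assume "x \<in> S" "y \<in> S" then show "M x y \<in> S" by (rule M_closed)
  next
    fix x assume "x \<in> S" then show "M Qone x = x" by (rule M_one)
  next
    fix x assume "x \<in> S" then show "M x Qone = x" using M_one M_comm by metis
  qed (use ex ex2 in auto)
qed

lemma A_loop: "is_A_loop S M Qone"
  unfolding is_A_loop_def
proof (intro conjI ballI)
  fix f assume "f \<in> Inn S M"
  then obtain al be where "f = sh al be" using Inn_shear by blast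
  then show "is_automorphism S M f" using shear_aut by simp
qed (rule is_loop)

end

context QL begin

lemma card_S: "card S = n ^ 3"
  by (simp add: Qcar_def Zn_def card_cartesian_product power3_eq_cube)

lemma dvd0: "0 \<le> t \<Longrightarrow> t < int n \<Longrightarrow> int n dvd t \<Longrightarrow> t = 0"
  by (metis dvd_imp_mod_0 mod_pos_pos_trivial)

lemma e001: "(0::int,0::int,1::int) \<in> S" and e010: "(0::int,1::int,0::int) \<in> S"
  using n2 by (auto simp: memS)

lemma not_assoc: "\<not> is_associative S M"
proof
  assume "is_associative S M"
  then have "M (M (0,0,1) (0,0,1)) (0,1,0) = M (0,0,1) (M (0,0,1) (0,1,0))"
    using e001 e010 unfolding is_associative_def by blast
  then have "int n dvd 1" using assoc_iff[OF e001 e001 e010] by simp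
  then show False using n2 by simp
qed

lemma left_nuc: "left_nucleus S M = Zn n \<times> {0} \<times> {0}"
proof (rule Set.set_eqI)
  fix x :: "int\<times>int\<times>int"
  obtain x1 x2 x3 where x: "x = (x1,x2,x3)" by (cases x) auto
  show "x \<in> left_nucleus S M \<longleftrightarrow> x \<in> Zn n \<times> {0} \<times> {0}"
  proof
    assume h: "x \<in> left_nucleus S M"
    then have xS: "x \<in> S" and A: "\<forall>y\<in>S. \<forall>z\<in>S. M (M x y) z = M x (M y z)"
      by (auto simp: left_nucleus_def)
    have "int n dvd x3" using A e001 e010 assoc_iff[OF xS e001 e010] by (simp add: x)
    then have 3: "x3 = 0" using xS dvd0 by (simp add: x memS)
    have "int n dvd - x2" using A e001 assoc_iff[OF xS e001 e001] by (simp add: x)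
    then have 2: "x2 = 0" using xS dvd0 by (simp add: x memS)
    show "x \<in> Zn n \<times> {0} \<times> {0}" using xS 2 3 by (simp add: x Qcar_def)
  next
    assume h: "x \<in> Zn n \<times> {0} \<times> {0}"
    then have xS: "x \<in> S" using npos by (auto simp: x Qcar_def Zn_def)
    have "M (M x y) z = M x (M y z)" if "y \<in> S" "z \<in> S" for y z
      using assoc_iff[OF xS that] h by (simp add: x)
    then show "x \<in> left_nucleus S M" using xS by (simp add: left_nucleus_def)
  qed
qed

lemma mid_nuc: "middle_nucleus S M = Zn n \<times> Zn n \<times> {0}"
proof (rule Set.set_eqI)
  fix y :: "int\<times>int\<times>int"
  obtain y1 y2 y3 where y: "y = (y1,y2,y3)" by (cases y) auto
  show "y \<in> middle_nucleus S M \<longleftrightarrow> y \<in> Zn n \<times> Zn n \<times> {0}"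
  proof
    assume h: "y \<in> middle_nucleus S M"
    then have yS: "y \<in> S" and A: "\<forall>x\<in>S. \<forall>z\<in>S. M (M x y) z = M x (M y z)"
      by (auto simp: middle_nucleus_def)
    have "int n dvd y3" using A e001 e010 assoc_iff[OF e001 yS e010] by (simp add: y)
    then have 3: "y3 = 0" using yS dvd0 by (simp add: y memS)
    show "y \<in> Zn n \<times> Zn n \<times> {0}" using yS 3 by (simp add: y Qcar_def)
  next
    assume h: "y \<in> Zn n \<times> Zn n \<times> {0}"
    then have yS: "y \<in> S" using npos by (auto simp: y Qcar_def Zn_def)
    have "M (M x y) z = M x (M y z)" if "x \<in> S" "z \<in> S" for x z
      using assoc_iff[OF that(1) yS that(2)] h by (simp add: y)
    then show "y \<in> middle_nucleus S M" using yS by (simp add: middle_nucleus_def)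
  qed
qed

lemma right_nuc: "right_nucleus S M = Zn n \<times> {0} \<times> {0}"
proof (rule Set.set_eqI)
  fix z :: "int\<times>int\<times>int"
  obtain z1 z2 z3 where z: "z = (z1,z2,z3)" by (cases z) auto
  show "z \<in> right_nucleus S M \<longleftrightarrow> z \<in> Zn n \<times> {0} \<times> {0}"
  proof
    assume h: "z \<in> right_nucleus S M"
    then have zS: "z \<in> S" and A: "\<forall>x\<in>S. \<forall>y\<in>S. M (M x y) z = M x (M y z)"
      by (auto simp: right_nucleus_def)
    have "int n dvd z2" using A e001 assoc_iff[OF e001 e001 zS] by (simp add: z)
    then have 2: "z2 = 0" using zS dvd0 by (simp add: z memS)
    have "int n dvd - z3" using A e001 e010 assoc_iff[OF e010 e001 zS] by (simp add: z)
    then have 3: "z3 = 0" using zS dvd0 by (simp add: z memS)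
    show "z \<in> Zn n \<times> {0} \<times> {0}" using zS 2 3 by (simp add: z Qcar_def)
  next
    assume h: "z \<in> Zn n \<times> {0} \<times> {0}"
    then have zS: "z \<in> S" using npos by (auto simp: z Qcar_def Zn_def)
    have "M (M x y) z = M x (M y z)" if "x \<in> S" "y \<in> S" for x y
      using assoc_iff[OF that zS] h by (simp add: z)
    then show "z \<in> right_nucleus S M" using zS by (simp add: right_nucleus_def)
  qed
qed

lemma center: "loop_center S M = Zn n \<times> {0} \<times> {0}"
proof -
  have "Zn n \<times> {0} \<times> {0} \<subseteq> Zn n \<times> Zn n \<times> {0}" using npos by (auto simp: Zn_def)
  then show ?thesis unfolding loop_center_def left_nuc mid_nuc right_nuc
    by (auto simp: M_comm)
qed

end

definition Cs :: "nat \<Rightarrow> int \<Rightarrow> int \<Rightarrow> (int\<times>int\<times>int) set" where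
  "Cs n p q = Zn n \<times> {p} \<times> {q}"

definition piq :: "(int\<times>int\<times>int) set \<Rightarrow> int\<times>int" where
  "piq A = snd (SOME x. x \<in> A)"

definition sig :: "(int\<times>int\<times>int \<Rightarrow> int\<times>int\<times>int) \<Rightarrow> int\<times>int" where
  "sig f = (fst (f (0,1,0)), fst (f (0,0,1)))"

context QL begin

abbreviation "ZZ \<equiv> integer_mod_group n \<times>\<times> integer_mod_group n"
abbreviation "Zc \<equiv> Zn n \<times> {0::int} \<times> {0::int}"
abbreviation "Qt \<equiv> quotient_loop S M Qone Zc"

lemma ZZ_carrier: "carrier ZZ = Zn n \<times> Zn n"
  using n2 by (simp add: DirProd_def carrier_integer_mod_group Zn_def)

lemma ZZ_mult: "(p,q) \<otimes>\<^bsub>ZZ\<^esub> (p',q') = ((p+p') mod int n, (q+q') mod int n)"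
  by (simp add: DirProd_def)

lemma ZZ_group: "group ZZ"
  by (simp add: DirProd_group)

lemma lcoset_eq: "x \<in> S \<Longrightarrow> lcoset M x Zc = Cs n (fst (snd x)) (snd (snd x))"
proof -
  assume xS: "x \<in> S"
  obtain x1 x2 x3 where x: "x = (x1,x2,x3)" by (cases x) auto
  have b: "0 \<le> x1" "x1 < int n" "0 \<le> x2" "x2 < int n" "0 \<le> x3" "x3 < int n"
    using xS by (auto simp: x memS)
  have Mz: "M x (z1,0,0) = ((x1+z1) mod int n, x2, x3)" for z1
    using b by (simp add: x Mdef ovf0)
  show ?thesis
  proof (rule Set.set_eqI)
    fix w :: "int\<times>int\<times>int"
    show "w \<in> lcoset M x Zc \<longleftrightarrow> w \<in> Cs n (fst (snd x)) (snd (snd x))"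
    proof
      assume "w \<in> lcoset M x Zc"
      then obtain z1 where "w = M x (z1,0,0)" by (auto simp: lcoset_def)
      then show "w \<in> Cs n (fst (snd x)) (snd (snd x))" using Mz npos by (simp add: Cs_def Zn_def x)
    next
      assume "w \<in> Cs n (fst (snd x)) (snd (snd x))"
      then obtain t where t: "w = (t, x2, x3)" "0 \<le> t" "t < int n" by (auto simp: Cs_def Zn_def x)
      have "(x1 + (t - x1) mod int n) mod int n = t mod int n"
        by (rule strip_eq, (rule mm_mod mm_add mm_diff mm_mult refl)+) simp
      then have "w = M x ((t - x1) mod int n, 0, 0)" using Mz t by simp
      moreover have "((t - x1) mod int n, 0::int, 0::int) \<in> Zc" using npos by (simp add: Zn_def)
      ultimately show "w \<in> lcoset M x Zc" by (auto simp: lcoset_def)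
    qed
  qed
qed

lemma Qt_carrier: "A \<in> carrier Qt \<longleftrightarrow> (\<exists>p q. p \<in> Zn n \<and> q \<in> Zn n \<and> A = Cs n p q)"
proof
  assume "A \<in> carrier Qt"
  then obtain x where "x \<in> S" "A = lcoset M x Zc" by (auto simp: quotient_loop_def)
  then show "\<exists>p q. p \<in> Zn n \<and> q \<in> Zn n \<and> A = Cs n p q" using lcoset_eq
    by (cases x) (auto simp: Qcar_def)
next
  assume "\<exists>p q. p \<in> Zn n \<and> q \<in> Zn n \<and> A = Cs n p q"
  then obtain p q where pq: "p \<in> Zn n" "q \<in> Zn n" "A = Cs n p q" by blast
  have "(0,p,q) \<in> S" using pq npos by (simp add: Qcar_def Zn_def)
  moreover have "A = lcoset M (0,p,q) Zc" using lcoset_eq[OF calculation] pq by simp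
  ultimately show "A \<in> carrier Qt" by (auto simp: quotient_loop_def)
qed

lemma some_Cs: "p \<in> Zn n \<Longrightarrow> q \<in> Zn n \<Longrightarrow> (SOME x. x \<in> Cs n p q) \<in> S \<and> snd (SOME x. x \<in> Cs n p q) = (p,q)"
proof -
  assume pq: "p \<in> Zn n" "q \<in> Zn n"
  have "(0,p,q) \<in> Cs n p q" using npos by (simp add: Cs_def Zn_def)
  then have "(SOME x. x \<in> Cs n p q) \<in> Cs n p q" by (rule someI)
  then show ?thesis using pq by (auto simp: Cs_def Qcar_def)
qed

lemma piq_Cs: "p \<in> Zn n \<Longrightarrow> q \<in> Zn n \<Longrightarrow> piq (Cs n p q) = (p,q)"
  using some_Cs by (simp add: piq_def)

lemma Qt_mult: "p \<in> Zn n \<Longrightarrow> q \<in> Zn n \<Longrightarrow> p' \<in> Zn n \<Longrightarrow> q' \<in> Zn n \<Longrightarrow>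
   Cs n p q \<otimes>\<^bsub>Qt\<^esub> Cs n p' q' = Cs n ((p+p') mod int n) ((q+q') mod int n)"
proof -
  assume h: "p \<in> Zn n" "q \<in> Zn n" "p' \<in> Zn n" "q' \<in> Zn n"
  obtain x1 x2 x3 where x: "(SOME x. x \<in> Cs n p q) = (x1,x2,x3)" by (cases "SOME x. x \<in> Cs n p q") auto
  obtain y1 y2 y3 where y: "(SOME x. x \<in> Cs n p' q') = (y1,y2,y3)" by (cases "SOME x. x \<in> Cs n p' q'") auto
  have xs: "(x1,x2,x3) \<in> S" "x2 = p" "x3 = q" using some_Cs[OF h(1,2)] x by auto
  have ys: "(y1,y2,y3) \<in> S" "y2 = p'" "y3 = q'" using some_Cs[OF h(3,4)] y by auto
  have "Cs n p q \<otimes>\<^bsub>Qt\<^esub> Cs n p' q' = lcoset M (M (x1,x2,x3) (y1,y2,y3)) Zc"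
    by (simp add: quotient_loop_def x y)
  also have "\<dots> = Cs n ((p+p') mod int n) ((q+q') mod int n)"
    using lcoset_eq[OF M_closed[OF xs(1) ys(1)]] xs ys by (simp add: Mdef)
  finally show ?thesis .
qed

lemma Qt_iso: "piq \<in> iso Qt ZZ"
proof -
  have hom: "piq \<in> hom Qt ZZ"
  proof (rule homI)
    fix A assume "A \<in> carrier Qt"
    then obtain p q where "p \<in> Zn n" "q \<in> Zn n" "A = Cs n p q" using Qt_carrier by blast
    then show "piq A \<in> carrier ZZ" unfolding ZZ_carrier by (simp add: piq_Cs)
  next
    fix A B assume "A \<in> carrier Qt" "B \<in> carrier Qt"
    then obtain p q p' q' where pq: "p \<in> Zn n" "q \<in> Zn n" "A = Cs n p q"
       "p' \<in> Zn n" "q' \<in> Zn n" "B = Cs n p' q'" using Qt_carrier by meson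
    have m: "(p+p') mod int n \<in> Zn n" "(q+q') mod int n \<in> Zn n" using npos by (auto simp: Zn_def)
    show "piq (A \<otimes>\<^bsub>Qt\<^esub> B) = piq A \<otimes>\<^bsub>ZZ\<^esub> piq B"
      unfolding pq(3) pq(6) Qt_mult[OF pq(1,2,4,5)] using m pq by (simp add: piq_Cs ZZ_mult)
  qed
  have bij: "bij_betw piq (carrier Qt) (carrier ZZ)"
  proof (rule bij_betw_imageI)
    show "inj_on piq (carrier Qt)"
    proof (rule inj_onI)
      fix A B assume "A \<in> carrier Qt" "B \<in> carrier Qt" "piq A = piq B"
      then show "A = B" using Qt_carrier piq_Cs by (metis prod.inject)
    qed
    show "piq ` carrier Qt = carrier ZZ"
    proof
      show "piq ` carrier Qt \<subseteq> carrier ZZ" unfolding ZZ_carrier using Qt_carrier piq_Cs by auto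
      show "carrier ZZ \<subseteq> piq ` carrier Qt"
      proof
        fix r assume "r \<in> carrier ZZ"
        then obtain p q where "r = (p,q)" "p \<in> Zn n" "q \<in> Zn n" unfolding ZZ_carrier by auto
        then have "r = piq (Cs n p q)" "Cs n p q \<in> carrier Qt" using piq_Cs Qt_carrier by auto
        then show "r \<in> piq ` carrier Qt" by blast
      qed
    qed
  qed
  show ?thesis using hom bij by (simp add: iso_def)
qed

lemma sig_sh: "sig (sh al be) = (al mod int n, be mod int n)"
  using e001 e010 by (simp add: sig_def shear_app)

lemma Inn_iso: "sig \<in> iso (Inn_group S M) ZZ"
proof -
  have C: "carrier (Inn_group S M) = Inn S M" by (simp add: Inn_group_def)
  have hom: "sig \<in> hom (Inn_group S M) ZZ"
  proof (rule homI)
    fix f assume "f \<in> carrier (Inn_group S M)"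
    then obtain al be where "f = sh al be" using Inn_shear C by blast
    then show "sig f \<in> carrier ZZ" unfolding ZZ_carrier using npos by (simp add: sig_sh Zn_def)
  next
    fix f g assume "f \<in> carrier (Inn_group S M)" "g \<in> carrier (Inn_group S M)"
    then obtain al be ga de where "f = sh al be" "g = sh ga de" using Inn_shear C by blast
    moreover have "f \<otimes>\<^bsub>Inn_group S M\<^esub> g = f \<circ> g" by (simp add: Inn_group_def)
    moreover have "((al + ga) mod int n, (be + de) mod int n) = ((al mod int n + ga mod int n) mod int n, (be mod int n + de mod int n) mod int n)"
      by (simp add: mod_add_eq)
    ultimately show "sig (f \<otimes>\<^bsub>Inn_group S M\<^esub> g) = sig f \<otimes>\<^bsub>ZZ\<^esub> sig g"
      by (simp only: shear_comp sig_sh ZZ_mult)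
  qed
  have bij: "bij_betw sig (carrier (Inn_group S M)) (carrier ZZ)"
  proof (rule bij_betw_imageI)
    show "inj_on sig (carrier (Inn_group S M))"
    proof (rule inj_onI)
      fix f g assume "f \<in> carrier (Inn_group S M)" "g \<in> carrier (Inn_group S M)" "sig f = sig g"
      then obtain al be ga de where fg: "f = sh al be" "g = sh ga de" using Inn_shear C by blast
      then have "(al mod int n, be mod int n) = (ga mod int n, de mod int n)"
        using \<open>sig f = sig g\<close> sig_sh by simp
      then show "f = g" unfolding fg by (intro shear_cong) simp_all
    qed
    show "sig ` carrier (Inn_group S M) = carrier ZZ"
    proof
      show "sig ` carrier (Inn_group S M) \<subseteq> carrier ZZ"
      proof
        fix r assume "r \<in> sig ` carrier (Inn_group S M)"
        then obtain f where "f \<in> Inn S M" "r = sig f" using C by auto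
        then obtain al be where "r = sig (sh al be)" using Inn_shear by blast
        then show "r \<in> carrier ZZ" unfolding ZZ_carrier using npos by (simp add: sig_sh Zn_def)
      qed
      show "carrier ZZ \<subseteq> sig ` carrier (Inn_group S M)"
      proof
        fix r assume "r \<in> carrier ZZ"
        then obtain p q where r: "r = (p,q)" "p \<in> Zn n" "q \<in> Zn n" unfolding ZZ_carrier by auto
        then have "r = sig (sh p q)" by (simp add: sig_sh Zn_def)
        moreover have "sh p q \<in> carrier (Inn_group S M)" using C shear_Inn by simp
        ultimately show "r \<in> sig ` carrier (Inn_group S M)" by blast
      qed
    qed
  qed
  show ?thesis using hom bij by (simp add: iso_def)
qed

lemma ZZ_Inn_iso: "(\<lambda>(p,q). sh p q) \<in> iso ZZ (Inn_group S M)"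
proof -
  have C: "carrier (Inn_group S M) = Inn S M" by (simp add: Inn_group_def)
  have hom: "(\<lambda>(p,q). sh p q) \<in> hom ZZ (Inn_group S M)"
  proof (rule homI)
    fix r assume "r \<in> carrier ZZ"
    then show "(\<lambda>(p,q). sh p q) r \<in> carrier (Inn_group S M)" using C shear_Inn by (cases r) simp
  next
    fix r r' assume "r \<in> carrier ZZ" "r' \<in> carrier ZZ"
    obtain p q where r: "r = (p,q)" by (cases r) auto
    obtain p' q' where r': "r' = (p',q')" by (cases r') auto
    have "sh ((p+p') mod int n) ((q+q') mod int n) = sh (p+p') (q+q')" by (rule shear_cong) simp_all
    then show "(\<lambda>(p,q). sh p q) (r \<otimes>\<^bsub>ZZ\<^esub> r') = (\<lambda>(p,q). sh p q) r \<otimes>\<^bsub>Inn_group S M\<^esub> (\<lambda>(p,q). sh p q) r'"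
      by (simp add: r r' ZZ_mult Inn_group_def shear_comp)
  qed
  have bij: "bij_betw (\<lambda>(p,q). sh p q) (carrier ZZ) (carrier (Inn_group S M))"
  proof (rule bij_betw_imageI)
    show "inj_on (\<lambda>(p,q). sh p q) (carrier ZZ)"
    proof (rule inj_onI)
      fix r r' assume h: "r \<in> carrier ZZ" "r' \<in> carrier ZZ" "(\<lambda>(p,q). sh p q) r = (\<lambda>(p,q). sh p q) r'"
      obtain p q where r: "r = (p,q)" by (cases r) auto
      obtain p' q' where r': "r' = (p',q')" by (cases r') auto
      have b: "p \<in> Zn n" "q \<in> Zn n" "p' \<in> Zn n" "q' \<in> Zn n" using h(1,2) unfolding ZZ_carrier by (auto simp: r r')
      have "sig (sh p q) = sig (sh p' q')" using h(3) by (simp add: r r')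
      then show "r = r'" using b by (simp add: sig_sh r r' Zn_def)
    qed
    show "(\<lambda>(p,q). sh p q) ` carrier ZZ = carrier (Inn_group S M)"
    proof
      show "(\<lambda>(p,q). sh p q) ` carrier ZZ \<subseteq> carrier (Inn_group S M)" using C shear_Inn by auto
      show "carrier (Inn_group S M) \<subseteq> (\<lambda>(p,q). sh p q) ` carrier ZZ"
      proof
        fix f assume "f \<in> carrier (Inn_group S M)"
        then obtain al be where f: "f = sh al be" using Inn_shear C by blast
        have "sh al be = sh (al mod int n) (be mod int n)" by (rule shear_cong) simp_all
        moreover have "(al mod int n, be mod int n) \<in> carrier ZZ" unfolding ZZ_carrier using npos by (simp add: Zn_def)
        ultimately show "f \<in> (\<lambda>(p,q). sh p q) ` carrier ZZ" using f by force
      qed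
    qed
  qed
  show ?thesis using hom bij by (simp add: iso_def)
qed

lemma isos: "Qt \<cong> Inn_group S M" "Inn_group S M \<cong> ZZ" "Qt \<cong> ZZ"
proof -
  show q: "Qt \<cong> ZZ" using Qt_iso by (auto simp: is_iso_def)
  show i: "Inn_group S M \<cong> ZZ" using Inn_iso by (auto simp: is_iso_def)
  show "Qt \<cong> Inn_group S M" using iso_set_trans[OF Qt_iso ZZ_Inn_iso] by (auto simp: is_iso_def)
qed

end

lemma ch2: "2 * (Suc k choose 2) = Suc k * k"
  by (induction k) (auto simp: numeral_2_eq_2)

lemma ch3: "2 * int (Suc (Suc k) choose 3) = 2 * int (Suc k choose 3) + int (Suc k) * int k"
proof -
  have "Suc (Suc k) choose 3 = (Suc k choose 2) + (Suc k choose 3)"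
    by (simp add: numeral_3_eq_3 numeral_2_eq_2)
  then have "2 * (Suc (Suc k) choose 3) = 2 * (Suc k choose 3) + Suc k * k" using ch2 by simp
  then show ?thesis by (metis of_nat_add of_nat_mult of_nat_numeral)
qed

lemma sumS: "f 0 = (0::int) \<Longrightarrow> sum f {1..<Suc k} = sum f {1..<k} + f k"
  by (cases k) (auto simp: sum.atLeastLessThan_Suc)

context QL begin

lemma pow_formula: "(x1,x2,x3) \<in> S \<Longrightarrow> loop_pow M Qone (x1, x2, x3) k =
          ((int k * x1 + 2 * int ((k + 1) choose 3) * x2 * x3 ^ 2
              + a * (\<Sum>j\<in>{1..<k}. ovf n x2 ((int j * x2) mod int n))
              + b * (\<Sum>j\<in>{1..<k}. ovf n x3 ((int j * x3) mod int n))) mod int n,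
           (int k * x2) mod int n, (int k * x3) mod int n)"
proof (induction k)
  case 0 then show ?case by (simp add: Qone_def numeral_3_eq_3)
next
  case (Suc k)
  have b: "0 \<le> x1" "x1 < int n" "0 \<le> x2" "x2 < int n" "0 \<le> x3" "x3 < int n"
    using Suc.prems by (auto simp: memS)
  define s2 where "s2 = (\<Sum>j\<in>{1..<k}. ovf n x2 ((int j * x2) mod int n))"
  define s3 where "s3 = (\<Sum>j\<in>{1..<k}. ovf n x3 ((int j * x3) mod int n))"
  define o2 where "o2 = ovf n x2 ((int k * x2) mod int n)"
  define o3 where "o3 = ovf n x3 ((int k * x3) mod int n)"
  define C where "C = int (Suc k choose 3)"
  have S2: "(\<Sum>j\<in>{1..<Suc k}. ovf n x2 ((int j * x2) mod int n)) = s2 + o2"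
    unfolding s2_def o2_def using b by (intro sumS) (simp add: ovf0)
  have S3: "(\<Sum>j\<in>{1..<Suc k}. ovf n x3 ((int j * x3) mod int n)) = s3 + o3"
    unfolding s3_def o3_def using b by (intro sumS) (simp add: ovf0)
  have CC: "2 * int (Suc k + 1 choose 3) = 2 * C + int (Suc k) * int k"
    unfolding C_def using ch3[of k] by simp
  have IH: "loop_pow M Qone (x1, x2, x3) k = ((int k * x1 + 2 * C * x2 * x3 ^ 2 + a * s2 + b * s3) mod int n,
           (int k * x2) mod int n, (int k * x3) mod int n)"
    using Suc.IH Suc.prems by (simp add: C_def s2_def s3_def)
  have e1: "(x1 + (int k * x1 + 2 * C * x2 * x3 ^ 2 + a * s2 + b * s3) mod int n
       + (((int k + 1) * x2) mod int n) * x3 * ((int k * x3) mod int n) + a * o2 + b * o3) mod int n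
     = ((int k + 1) * x1 + (2 * C + (int k + 1) * int k) * x2 * x3 ^ 2 + a * (s2 + o2) + b * (s3 + o3)) mod int n"
    by (rule strip_eq, (rule mm_mod mm_add mm_diff mm_mult refl)+) (simp add: algebra_simps power2_eq_square)
  have e2: "(x2 + (int k * x2) mod int n) mod int n = ((int k + 1) * x2) mod int n"
    by (rule strip_eq, (rule mm_mod mm_add mm_diff mm_mult refl)+) (simp add: algebra_simps)
  have e3: "(x3 + (int k * x3) mod int n) mod int n = ((int k + 1) * x3) mod int n"
    by (rule strip_eq, (rule mm_mod mm_add mm_diff mm_mult refl)+) (simp add: algebra_simps)
  have "loop_pow M Qone (x1, x2, x3) (Suc k) = M (x1,x2,x3) (loop_pow M Qone (x1, x2, x3) k)" by simp
  also have "\<dots> = (((int k + 1) * x1 + (2 * C + (int k + 1) * int k) * x2 * x3 ^ 2 + a * (s2 + o2) + b * (s3 + o3)) mod int n,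
      ((int k + 1) * x2) mod int n, ((int k + 1) * x3) mod int n)"
    unfolding IH Mdef o2_def[symmetric] o3_def[symmetric] e1 e2 e3 ..
  finally show ?case unfolding S2 S3 CC by (simp add: algebra_simps)
qed

end

theorem proposition5p4:
  fixes n :: nat and a b :: int
  assumes hn: "n \<ge> 2"
    and ha: "a \<in> Zn n" and hb: "b \<in> Zn n"
  defines "Q \<equiv> Qcar n" and "m \<equiv> Qmul n a b"
  shows
    "(\<forall>x1 x2 x3 y1 y2 y3. (x1, x2, x3) \<in> Q \<longrightarrow> (y1, y2, y3) \<in> Q \<longrightarrow>
        ldiv Q m (x1, x2, x3) (y1, y2, y3) =
          ((y1 - x1 - ((y3 - x3) mod int n) * x3 * y2 - a * ovf n x2 ((y2 - x2) mod int n)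
               - b * ovf n x3 ((y3 - x3) mod int n)) mod int n,
           (y2 - x2) mod int n, (y3 - x3) mod int n))
   \<and> (\<forall>x1 x2 x3 y1 y2 y3 z1 z2 z3. (x1, x2, x3) \<in> Q \<longrightarrow> (y1, y2, y3) \<in> Q \<longrightarrow> (z1, z2, z3) \<in> Q \<longrightarrow>
        ldiv Q m (m (x1, x2, x3) (y1, y2, y3)) (m (x1, x2, x3) (m (y1, y2, y3) (z1, z2, z3))) =
          ((z1 + y3 * (x3 * z2 - x2 * z3)) mod int n, z2, z3))
   \<and> (is_A_loop Q m Qone \<and> is_commutative Q m \<and> \<not> is_associative Q m \<and> card Q = n ^ 3)
   \<and> (left_nucleus Q m = Zn n \<times> {0} \<times> {0} \<and> loop_center Q m = Zn n \<times> {0} \<times> {0}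
      \<and> middle_nucleus Q m = Zn n \<times> Zn n \<times> {0})
   \<and> (quotient_loop Q m Qone (loop_center Q m) \<cong> Inn_group Q m
      \<and> Inn_group Q m \<cong> integer_mod_group n \<times>\<times> integer_mod_group n
      \<and> quotient_loop Q m Qone (loop_center Q m) \<cong> integer_mod_group n \<times>\<times> integer_mod_group n
      \<and> Inn Q m = {Lmap Q m u v | u v. u \<in> Q \<and> v \<in> Q})
   \<and> (\<forall>x1 x2 x3 k. (x1, x2, x3) \<in> Q \<longrightarrow>
        loop_pow m Qone (x1, x2, x3) k =
          ((int k * x1 + 2 * int ((k + 1) choose 3) * x2 * x3 ^ 2
              + a * (\<Sum>j\<in>{1..<k}. ovf n x2 ((int j * x2) mod int n))
              + b * (\<Sum>j\<in>{1..<k}. ovf n x3 ((int j * x3) mod int n))) mod int n,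
           (int k * x2) mod int n, (int k * x3) mod int n))"
proof -
  interpret QL n a b by unfold_locales (rule hn)
  have i: "\<forall>x1 x2 x3 y1 y2 y3. (x1, x2, x3) \<in> Q \<longrightarrow> (y1, y2, y3) \<in> Q \<longrightarrow>
        ldiv Q m (x1, x2, x3) (y1, y2, y3) =
          ((y1 - x1 - ((y3 - x3) mod int n) * x3 * y2 - a * ovf n x2 ((y2 - x2) mod int n)
               - b * ovf n x3 ((y3 - x3) mod int n)) mod int n,
           (y2 - x2) mod int n, (y3 - x3) mod int n)"
    unfolding Q_def m_def using ldiv_formula by (simp add: ldc_def)
  have ii: "\<forall>x1 x2 x3 y1 y2 y3 z1 z2 z3. (x1, x2, x3) \<in> Q \<longrightarrow> (y1, y2, y3) \<in> Q \<longrightarrow> (z1, z2, z3) \<in> Q \<longrightarrow>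
        ldiv Q m (m (x1, x2, x3) (y1, y2, y3)) (m (x1, x2, x3) (m (y1, y2, y3) (z1, z2, z3))) =
          ((z1 + y3 * (x3 * z2 - x2 * z3)) mod int n, z2, z3)"
    unfolding Q_def m_def using ldiv_assoc by (simp add: cc_def)
  have iii: "is_A_loop Q m Qone \<and> is_commutative Q m \<and> \<not> is_associative Q m \<and> card Q = n ^ 3"
    unfolding Q_def m_def using A_loop not_assoc card_S by (simp add: is_commutative_def M_comm)
  have iv: "left_nucleus Q m = Zn n \<times> {0} \<times> {0} \<and> loop_center Q m = Zn n \<times> {0} \<times> {0}
      \<and> middle_nucleus Q m = Zn n \<times> Zn n \<times> {0}"
    unfolding Q_def m_def using left_nuc center mid_nuc by simp
  have v: "quotient_loop Q m Qone (loop_center Q m) \<cong> Inn_group Q m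
      \<and> Inn_group Q m \<cong> integer_mod_group n \<times>\<times> integer_mod_group n
      \<and> quotient_loop Q m Qone (loop_center Q m) \<cong> integer_mod_group n \<times>\<times> integer_mod_group n
      \<and> Inn Q m = {Lmap Q m u v | u v. u \<in> Q \<and> v \<in> Q}"
    unfolding Q_def m_def center using isos Inn_eq by simp
  have vi: "\<forall>x1 x2 x3 k. (x1, x2, x3) \<in> Q \<longrightarrow>
        loop_pow m Qone (x1, x2, x3) k =
          ((int k * x1 + 2 * int ((k + 1) choose 3) * x2 * x3 ^ 2
              + a * (\<Sum>j\<in>{1..<k}. ovf n x2 ((int j * x2) mod int n))
              + b * (\<Sum>j\<in>{1..<k}. ovf n x3 ((int j * x3) mod int n))) mod int n,
           (int k * x2) mod int n, (int k * x3) mod int n)"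
    unfolding Q_def m_def using pow_formula by blast
  show ?thesis using i ii iii iv v vi by blast
qed


end
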